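(* Let $A$ be a Noetherian ring, $X=\mathrm{Spec}(A)$, $I=(f_1,\dots,f_n)\subseteq A$, $Z=V(I)$, $U=X\setminus Z$, $\widehat{A}$ the $I$-adic completion, $\mathfrak{X}=\mathrm{Spf}(\widehat{A})$ and $\mathfrak{X}^{\mathrm{ad}}=\mathrm{Spa}(\widehat{A},\widehat{A})$. Let $\sigma\colon\mathfrak{X}^{\mathrm{ad}}\to X$ send a continuous valuation $\nu$ to the prime $\{a\in A:\nu(a)=0\}$, let $U_i=D(f_i)$, $W_i=\sigma^{-1}(U_i)$ and $W=\sigma^{-1}(U)$. For a multi-index $\alpha\in\mathbb{Z}_{\ge0}^n$ put $f^{\alpha}=\prod_j f_j^{\alpha_j}$, and for $k\ge 0$ let \[ W_{i,k}=R_{\mathfrak{X}^{\mathrm{ad}}}\Big(\frac{\{f_i\}\cup\{f^{\alpha}\}_{|\alpha|=k,\ \alpha_i=0}}{f_i}\Big). \] Then $W_i=\bigcup_k W_{i,k}$ for each $i$; in particular \[ W=\bigcup_{i\le n}W_i=\bigcup_{i\le n}\bigcup_k W_{i,k}. \]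
   Context: For a finite subset $T\subseteq\widehat{A}$ generating an open ideal and $s\in\widehat{A}$, the rational subset is $R_{\mathfrak{X}^{\mathrm{ad}}}(T/s)=\{\nu\in\mathrm{Spa}(\widehat{A},\widehat{A}):\nu(t)\le\nu(s)\ \forall t\in T,\ \nu(s)\neq0\}$; here $|\alpha|=\sum_j\alpha_j$. The map $\sigma$ is the composite of the adification of $\mathfrak{X}\to X$ with the support morphism $\mathrm{Spa}(A,A)\to\mathrm{Spec}(A)$. *)

theory Defs
  imports "HOL-Algebra.Ring_Divisibility" "HOL-Algebra.Ideal_Product" "HOL-Algebra.QuotRing"
begin

text \<open>n-th power of an ideal, computed in the monoid of ideals (I^0 = A).\<close>
definition ideal_pow :: "('a, 'b) ring_scheme \<Rightarrow> 'a set \<Rightarrow> nat \<Rightarrow> 'a set" where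
  "ideal_pow R I n = I [^]\<^bsub>ideals_set R\<^esub> n"

text \<open>The I-adic completion as the inverse limit of the rings A / I^n: compatible
  sequences of cosets x n of I^n.\<close>
definition adic_completion :: "('a, 'b) ring_scheme \<Rightarrow> 'a set \<Rightarrow> (nat \<Rightarrow> 'a set) ring" where
  "adic_completion R I =
    \<lparr> carrier = {x. (\<forall>n. x n \<in> carrier (R Quot ideal_pow R I n)) \<and> (\<forall>n. x (Suc n) \<subseteq> x n)},
      mult = (\<lambda>x y n. x n \<otimes>\<^bsub>R Quot ideal_pow R I n\<^esub> y n),
      one = (\<lambda>n. \<one>\<^bsub>R Quot ideal_pow R I n\<^esub>),
      zero = (\<lambda>n. \<zero>\<^bsub>R Quot ideal_pow R I n\<^esub>),
      add = (\<lambda>x y n. x n \<oplus>\<^bsub>R Quot ideal_pow R I n\<^esub> y n) \<rparr>"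

definition compl_map :: "('a, 'b) ring_scheme \<Rightarrow> 'a set \<Rightarrow> 'a \<Rightarrow> (nat \<Rightarrow> 'a set)" where
  "compl_map R I a = (\<lambda>n. ideal_pow R I n +>\<^bsub>R\<^esub> a)"

text \<open>Open sets of the (inverse limit = I-adic) topology on the completion: a subset S
  is open iff every x in S has a neighbourhood x + ker(completion \<rightarrow> A/I^n) inside S.\<close>
definition compl_open :: "('a, 'b) ring_scheme \<Rightarrow> 'a set \<Rightarrow> (nat \<Rightarrow> 'a set) set \<Rightarrow> bool" where
  "compl_open R I S \<longleftrightarrow> S \<subseteq> carrier (adic_completion R I) \<and>
     (\<forall>x\<in>S. \<exists>n. \<forall>y\<in>carrier (adic_completion R I). y n = x n \<longrightarrow> y \<in> S)"

text \<open>Values in \<Gamma> \<union> {0} for a totally ordered abelian group \<Gamma> (written additively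
  in the type 'g); None is the element 0, Some g the group element g; Some 0 is 1.\<close>
fun vmult :: "'g::linordered_ab_group_add option \<Rightarrow> 'g option \<Rightarrow> 'g option" where
  "vmult (Some a) (Some b) = Some (a + b)"
| "vmult _ _ = None"

fun vle :: "'g::linordered_ab_group_add option \<Rightarrow> 'g option \<Rightarrow> bool" where
  "vle None _ = True"
| "vle (Some a) None = False"
| "vle (Some a) (Some b) = (a \<le> b)"

definition vlt :: "'g::linordered_ab_group_add option \<Rightarrow> 'g option \<Rightarrow> bool" where
  "vlt x y \<longleftrightarrow> vle x y \<and> x \<noteq> y"

definition valuation :: "('r, 'b) ring_scheme \<Rightarrow> ('r \<Rightarrow> 'g::linordered_ab_group_add option) \<Rightarrow> bool" where
  "valuation S v \<longleftrightarrow>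
     (\<forall>a\<in>carrier S. \<forall>b\<in>carrier S. v (a \<otimes>\<^bsub>S\<^esub> b) = vmult (v a) (v b)) \<and>
     (\<forall>a\<in>carrier S. \<forall>b\<in>carrier S. vle (v (a \<oplus>\<^bsub>S\<^esub> b)) (v a) \<or> vle (v (a \<oplus>\<^bsub>S\<^esub> b)) (v b)) \<and>
     v \<zero>\<^bsub>S\<^esub> = None \<and> v \<one>\<^bsub>S\<^esub> = Some 0"

definition value_group :: "('r, 'b) ring_scheme \<Rightarrow> ('r \<Rightarrow> 'g::linordered_ab_group_add option) \<Rightarrow> 'g set" where
  "value_group S v = \<Inter>{H. 0 \<in> H \<and> (\<forall>x\<in>H. \<forall>y\<in>H. x + y \<in> H) \<and> (\<forall>x\<in>H. - x \<in> H) \<and>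
                              {g. \<exists>a\<in>carrier S. v a = Some g} \<subseteq> H}"

text \<open>Points of Spa(A^, A^) (represented by valuations): continuous valuations with
  v(a) \<le> 1 on A^.\<close>
definition spa_point :: "('a, 'b) ring_scheme \<Rightarrow> 'a set \<Rightarrow> ((nat \<Rightarrow> 'a set) \<Rightarrow> 'g::linordered_ab_group_add option) \<Rightarrow> bool" where
  "spa_point R I v \<longleftrightarrow> valuation (adic_completion R I) v \<and>
     (\<forall>\<gamma>\<in>value_group (adic_completion R I) v.
        compl_open R I {a\<in>carrier (adic_completion R I). vlt (v a) (Some \<gamma>)}) \<and>
     (\<forall>a\<in>carrier (adic_completion R I). vle (v a) (Some 0))"

definition Spa :: "('a, 'b) ring_scheme \<Rightarrow> 'a set \<Rightarrow> ((nat \<Rightarrow> 'a set) \<Rightarrow> 'g::linordered_ab_group_add option) set" where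
  "Spa R I = {v. spa_point R I v}"

definition rational_subset :: "('a, 'b) ring_scheme \<Rightarrow> 'a set \<Rightarrow> (nat \<Rightarrow> 'a set) set \<Rightarrow> (nat \<Rightarrow> 'a set)
    \<Rightarrow> ((nat \<Rightarrow> 'a set) \<Rightarrow> 'g::linordered_ab_group_add option) set" where
  "rational_subset R I T s = {v\<in>Spa R I. (\<forall>t\<in>T. vle (v t) (v s)) \<and> v s \<noteq> None}"

definition sigma :: "('a, 'b) ring_scheme \<Rightarrow> 'a set \<Rightarrow> ((nat \<Rightarrow> 'a set) \<Rightarrow> 'g::linordered_ab_group_add option) \<Rightarrow> 'a set" where
  "sigma R I v = {a\<in>carrier R. v (compl_map R I a) = None}"

definition Spec :: "('a, 'b) ring_scheme \<Rightarrow> 'a set set" where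
  "Spec R = {P. primeideal P R}"

definition basic_open :: "('a, 'b) ring_scheme \<Rightarrow> 'a \<Rightarrow> 'a set set" where
  "basic_open R g = {P\<in>Spec R. g \<notin> P}"

definition compl_V :: "('a, 'b) ring_scheme \<Rightarrow> 'a set \<Rightarrow> 'a set set" where
  "compl_V R I = {P\<in>Spec R. \<not> I \<subseteq> P}"

definition preimage_sigma :: "('a, 'b) ring_scheme \<Rightarrow> 'a set \<Rightarrow> 'a set set
    \<Rightarrow> ((nat \<Rightarrow> 'a set) \<Rightarrow> 'g::linordered_ab_group_add option) set" where
  "preimage_sigma R I Y = {v\<in>Spa R I. sigma R I v \<in> Y}"

definition monomial :: "('a, 'b) ring_scheme \<Rightarrow> (nat \<Rightarrow> 'a) \<Rightarrow> nat \<Rightarrow> (nat \<Rightarrow> nat) \<Rightarrow> 'a" where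
  "monomial R f n \<alpha> = finprod R (\<lambda>j. f j [^]\<^bsub>R\<^esub> \<alpha> j) {..<n}"

definition multi_idx :: "nat \<Rightarrow> nat \<Rightarrow> nat \<Rightarrow> (nat \<Rightarrow> nat) set" where
  "multi_idx n i k = {\<alpha>. (\<forall>j\<ge>n. \<alpha> j = 0) \<and> (\<Sum>j<n. \<alpha> j) = k \<and> \<alpha> i = 0}"

definition W_ik :: "('a, 'b) ring_scheme \<Rightarrow> 'a set \<Rightarrow> (nat \<Rightarrow> 'a) \<Rightarrow> nat \<Rightarrow> nat \<Rightarrow> nat
    \<Rightarrow> ((nat \<Rightarrow> 'a set) \<Rightarrow> 'g::linordered_ab_group_add option) set" where
  "W_ik R I f n i k = rational_subset R I
     (insert (compl_map R I (f i)) {compl_map R I (monomial R f n \<alpha>) | \<alpha>. \<alpha> \<in> multi_idx n i k})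
     (compl_map R I (f i))"

end

theory Submission
  imports Defs
begin

context cring
begin

lemma ip_ideal: "ideal I R \<Longrightarrow> ideal (ideal_pow R I n) R"
proof -
  assume I: "ideal I R"
  interpret S: comm_monoid "ideals_set R" by (rule ideals_set_is_comm_monoid)
  have "I \<in> carrier (ideals_set R)" using I by (simp add: ideals_set_def)
  hence "I [^]\<^bsub>ideals_set R\<^esub> n \<in> carrier (ideals_set R)" by simp
  thus ?thesis by (simp add: ideals_set_def ideal_pow_def)
qed

lemma ip_mult: "ideal I R \<Longrightarrow> x \<in> ideal_pow R I a \<Longrightarrow> y \<in> ideal_pow R I b
   \<Longrightarrow> x \<otimes> y \<in> ideal_pow R I (a + b)"
proof -
  assume I: "ideal I R" and x: "x \<in> ideal_pow R I a" and y: "y \<in> ideal_pow R I b"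
  interpret S: comm_monoid "ideals_set R" by (rule ideals_set_is_comm_monoid)
  have "I \<in> carrier (ideals_set R)" using I by (simp add: ideals_set_def)
  hence "ideal_pow R I (a + b) = ideal_pow R I a \<cdot> ideal_pow R I b"
    using S.nat_pow_mult[of I a b] by (simp add: ideal_pow_def ideals_set_def)
  thus ?thesis using x y ideal_prod.prod by metis
qed

lemma ip_zero: "ideal_pow R I 0 = carrier R"
  by (simp add: ideal_pow_def ideals_set_def)

lemma ip_one: "ideal I R \<Longrightarrow> ideal_pow R I 1 = I"
proof -
  assume I: "ideal I R"
  interpret S: comm_monoid "ideals_set R" by (rule ideals_set_is_comm_monoid)
  have "I \<in> carrier (ideals_set R)" using I by (simp add: ideals_set_def)
  thus ?thesis by (simp add: ideal_pow_def)
qed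

lemma ip_Suc_sub: "ideal I R \<Longrightarrow> ideal_pow R I (Suc n) \<subseteq> ideal_pow R I n"
proof -
  assume I: "ideal I R"
  have "ideal_pow R I (Suc n) = ideal_pow R I n \<cdot> I"
    by (simp add: ideal_pow_def ideals_set_def)
  thus ?thesis using ideal_prod_inter[OF ip_ideal[OF I] I] by blast
qed

lemma ip_power: "ideal I R \<Longrightarrow> x \<in> I \<Longrightarrow> x [^] (c::nat) \<in> ideal_pow R I c"
proof (induction c)
  case 0
  then show ?case by (simp add: ip_zero ideal.Icarr)
next
  case (Suc c)
  have x1: "x \<in> ideal_pow R I 1" using ip_one[OF Suc.prems(1)] Suc.prems(2) by simp
  have "x [^] c \<otimes> x \<in> ideal_pow R I (c + 1)"
    by (rule ip_mult[OF Suc.prems(1) Suc.IH[OF Suc.prems] x1])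
  then show ?case by simp
qed

lemma ip_finprod:
  assumes I: "ideal I R" and f: "\<And>j. j < (N::nat) \<Longrightarrow> f j \<in> I"
  shows "finprod R (\<lambda>j. f j [^] (\<alpha> j :: nat)) {..<N} \<in> ideal_pow R I (\<Sum>j<N. \<alpha> j)"
  using f
proof (induction N)
  case 0
  then show ?case by (simp add: ip_zero)
next
  case (Suc N)
  have fc: "\<And>j. j < Suc N \<Longrightarrow> f j \<in> carrier R" using Suc.prems ideal.Icarr[OF I] by simp
  have "finprod R (\<lambda>j. f j [^] \<alpha> j) {..<Suc N}
        = f N [^] \<alpha> N \<otimes> finprod R (\<lambda>j. f j [^] \<alpha> j) {..<N}"
    unfolding lessThan_Suc using fc by (subst finprod_insert) (auto simp del: finprod_insert)
  moreover have "f N [^] \<alpha> N \<otimes> finprod R (\<lambda>j. f j [^] \<alpha> j) {..<N}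
      \<in> ideal_pow R I (\<alpha> N + (\<Sum>j<N. \<alpha> j))"
    by (rule ip_mult[OF I ip_power[OF I Suc.prems[of N]] Suc.IH]) (use Suc.prems in auto)
  ultimately show ?case by (simp only: sum.lessThan_Suc add.commute)
qed

lemma h_carrier:
  assumes I: "ideal I R" and a: "a \<in> carrier R"
  shows "compl_map R I a \<in> carrier (adic_completion R I)"
proof -
  have "\<forall>n. compl_map R I a n \<in> carrier (R Quot ideal_pow R I n)"
    using ring_hom_closed[OF ideal.rcos_ring_hom[OF ip_ideal[OF I]] a]
    by (simp add: compl_map_def)
  moreover have "\<forall>n. compl_map R I a (Suc n) \<subseteq> compl_map R I a n"
    using ip_Suc_sub[OF I]
    by (auto simp: compl_map_def a_r_coset_def r_coset_def)
  ultimately show ?thesis by (simp add: adic_completion_def)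
qed

lemma h_mult:
  assumes I: "ideal I R" and a: "a \<in> carrier R" and b: "b \<in> carrier R"
  shows "compl_map R I (a \<otimes> b) = compl_map R I a \<otimes>\<^bsub>adic_completion R I\<^esub> compl_map R I b"
  using ideal.rcoset_mult_add[OF ip_ideal[OF I] a b]
  by (auto simp: compl_map_def adic_completion_def FactRing_def)

lemma h_add:
  assumes I: "ideal I R" and a: "a \<in> carrier R" and b: "b \<in> carrier R"
  shows "compl_map R I (a \<oplus> b) = compl_map R I a \<oplus>\<^bsub>adic_completion R I\<^esub> compl_map R I b"
  using ideal.a_rcos_sum[OF ip_ideal[OF I] a b]
  by (auto simp: compl_map_def adic_completion_def FactRing_def)

lemma h_one: "compl_map R I \<one> = \<one>\<^bsub>adic_completion R I\<^esub>"
  by (auto simp: compl_map_def adic_completion_def FactRing_def)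

lemma h_zero:
  assumes I: "ideal I R"
  shows "compl_map R I \<zero> = \<zero>\<^bsub>adic_completion R I\<^esub>"
  using a_rcos_zero[OF ip_ideal[OF I] additive_subgroup.zero_closed[OF ideal.axioms(1)[OF ip_ideal[OF I]]]]
  by (auto simp: compl_map_def adic_completion_def FactRing_def)

lemma vmult_None: "vmult x None = None"
  by (cases x) auto

lemma vle_None: "vle x None \<Longrightarrow> x = None"
  by (cases x) auto

lemma sigma_prime:
  assumes I: "ideal I R" and v: "valuation (adic_completion R I) v"
  shows "primeideal (sigma R I v) R"
proof -
  let ?C = "adic_completion R I"
  let ?P = "sigma R I v"
  have vm: "\<And>a b. a \<in> carrier R \<Longrightarrow> b \<in> carrier R \<Longrightarrow>
     v (compl_map R I (a \<otimes> b)) = vmult (v (compl_map R I a)) (v (compl_map R I b))"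
    using v h_mult[OF I] h_carrier[OF I] unfolding valuation_def by auto
  have va: "\<And>a b. a \<in> carrier R \<Longrightarrow> b \<in> carrier R \<Longrightarrow>
     vle (v (compl_map R I (a \<oplus> b))) (v (compl_map R I a)) \<or> vle (v (compl_map R I (a \<oplus> b))) (v (compl_map R I b))"
    using v h_add[OF I] h_carrier[OF I] unfolding valuation_def by auto
  have v0: "v (compl_map R I \<zero>) = None" using v h_zero[OF I] unfolding valuation_def by auto
  have v1: "v (compl_map R I \<one>) = Some 0" using v h_one unfolding valuation_def by auto
  have sub: "subgroup ?P (add_monoid R)"
  proof
    show "?P \<subseteq> carrier (add_monoid R)" by (auto simp: sigma_def)
    show "\<one>\<^bsub>add_monoid R\<^esub> \<in> ?P" using v0 by (simp add: sigma_def)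
    fix x y assume x: "x \<in> ?P" and y: "y \<in> ?P"
    then show "x \<otimes>\<^bsub>add_monoid R\<^esub> y \<in> ?P"
      using va[of x y] vle_None by (auto simp: sigma_def)
  next
    fix x assume x: "x \<in> ?P"
    hence xc: "x \<in> carrier R" by (simp add: sigma_def)
    have "\<ominus> x = (\<ominus> \<one>) \<otimes> x" using xc by algebra
    hence "v (compl_map R I (\<ominus> x)) = None" using vm[of "\<ominus> \<one>" x] x xc vmult_None
      by (simp add: sigma_def)
    thus "inv\<^bsub>add_monoid R\<^esub> x \<in> ?P" using xc by (simp add: sigma_def a_inv_def)
  qed
  show ?thesis
  proof (rule primeidealI2)
    show "additive_subgroup ?P R" by (rule additive_subgroupI[OF sub])
    show "cring R" by (rule is_cring)
    fix a x assume "a \<in> ?P" "x \<in> carrier R"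
    then show "x \<otimes> a \<in> ?P" "a \<otimes> x \<in> ?P"
      using vm[of x a] vm[of a x] vmult_None by (auto simp: sigma_def)
  next
    have "\<one> \<notin> ?P" using v1 by (simp add: sigma_def)
    thus "carrier R \<noteq> ?P" using one_closed by blast
  next
    fix a b assume "a \<in> carrier R" "b \<in> carrier R" "a \<otimes> b \<in> ?P"
    then show "a \<in> ?P \<or> b \<in> ?P"
      using vm[of a b] by (cases "v (compl_map R I a)"; cases "v (compl_map R I b)") (auto simp: sigma_def)
  qed
qed

end


lemma vle_refl: "vle x x"
  by (cases x) auto

theorem proposition5p3:
  fixes R :: "('a, 'b) ring_scheme" and f :: "nat \<Rightarrow> 'a" and n :: nat and I :: "'a set"
  assumes "cring R" and "noetherian_ring R"
    and "f ` {..<n} \<subseteq> carrier R" and "I = Idl\<^bsub>R\<^esub> (f ` {..<n})"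
  shows "(\<forall>i<n. (preimage_sigma R I (basic_open R (f i))
                    :: ((nat \<Rightarrow> 'a set) \<Rightarrow> 'g::linordered_ab_group_add option) set)
                 = (\<Union>k. W_ik R I f n i k))
       \<and> (preimage_sigma R I (compl_V R I) :: ((nat \<Rightarrow> 'a set) \<Rightarrow> 'g option) set)
           = (\<Union>i<n. preimage_sigma R I (basic_open R (f i)))
       \<and> (preimage_sigma R I (compl_V R I) :: ((nat \<Rightarrow> 'a set) \<Rightarrow> 'g option) set)
           = (\<Union>i<n. \<Union>k. W_ik R I f n i k)"
proof -
  interpret cring R by fact
  have I: "ideal I R" using assms(3,4) genideal_ideal by simp
  have fI: "\<And>j. j < n \<Longrightarrow> f j \<in> I" using assms(3,4) genideal_self by auto
  have fc: "\<And>j. j < n \<Longrightarrow> f j \<in> carrier R" using assms(3) by auto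
  let ?C = "adic_completion R I"
  have spec: "\<And>v::((nat \<Rightarrow> 'a set) \<Rightarrow> 'g option). v \<in> Spa R I \<Longrightarrow> sigma R I v \<in> Spec R"
    using sigma_prime[OF I] by (auto simp: Spa_def spa_point_def Spec_def)
  have Wi: "\<And>i. i < n \<Longrightarrow> (preimage_sigma R I (basic_open R (f i)) :: ((nat \<Rightarrow> 'a set) \<Rightarrow> 'g option) set)
       = {v \<in> Spa R I. v (compl_map R I (f i)) \<noteq> None}"
    using spec fc by (auto simp: preimage_sigma_def basic_open_def sigma_def)
  have P1: "(preimage_sigma R I (basic_open R (f i)) :: ((nat \<Rightarrow> 'a set) \<Rightarrow> 'g option) set)
                 = (\<Union>k. W_ik R I f n i k)" if i: "i < n" for i
  proof
    show "(\<Union>k. W_ik R I f n i k) \<subseteq> (preimage_sigma R I (basic_open R (f i)) :: ((nat \<Rightarrow> 'a set) \<Rightarrow> 'g option) set)"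
      unfolding Wi[OF i] by (auto simp: W_ik_def rational_subset_def)
  next
    show "(preimage_sigma R I (basic_open R (f i)) :: ((nat \<Rightarrow> 'a set) \<Rightarrow> 'g option) set) \<subseteq> (\<Union>k. W_ik R I f n i k)"
      unfolding Wi[OF i]
    proof
      fix v :: "(nat \<Rightarrow> 'a set) \<Rightarrow> 'g option"
      assume "v \<in> {v \<in> Spa R I. v (compl_map R I (f i)) \<noteq> None}"
      then obtain \<gamma> where vS: "v \<in> Spa R I" and g: "v (compl_map R I (f i)) = Some \<gamma>" by auto
      have sp: "spa_point R I v" using vS by (simp add: Spa_def)
      have val: "valuation ?C v" using sp by (simp add: spa_point_def)
      have hfi: "compl_map R I (f i) \<in> carrier ?C" using h_carrier[OF I fc[OF i]] .
      have "\<gamma> \<in> value_group ?C v"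
        unfolding value_group_def using hfi g by blast
      hence op: "compl_open R I {a\<in>carrier ?C. vlt (v a) (Some \<gamma>)}"
        using sp by (simp add: spa_point_def)
      have h0: "compl_map R I \<zero>\<^bsub>R\<^esub> \<in> carrier ?C" using h_carrier[OF I] by simp
      have v0: "v (compl_map R I \<zero>\<^bsub>R\<^esub>) = None" using val h_zero[OF I] by (simp add: valuation_def)
      have x0: "compl_map R I \<zero>\<^bsub>R\<^esub> \<in> {a\<in>carrier ?C. vlt (v a) (Some \<gamma>)}"
        using h0 v0 by (simp add: vlt_def)
      have allf: "\<forall>x\<in>{a\<in>carrier ?C. vlt (v a) (Some \<gamma>)}. \<exists>m. \<forall>y\<in>carrier ?C. y m = x m \<longrightarrow> y \<in> {a\<in>carrier ?C. vlt (v a) (Some \<gamma>)}"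
        using op unfolding compl_open_def by (rule conjunct2)
      have "\<exists>m. \<forall>y\<in>carrier ?C. y m = compl_map R I \<zero>\<^bsub>R\<^esub> m \<longrightarrow> y \<in> {a\<in>carrier ?C. vlt (v a) (Some \<gamma>)}"
        by (rule bspec[OF allf x0])
      then obtain m where m0: "\<forall>y\<in>carrier ?C. y m = compl_map R I \<zero>\<^bsub>R\<^esub> m \<longrightarrow> y \<in> {a\<in>carrier ?C. vlt (v a) (Some \<gamma>)}"
        by (rule exE)
      have m: "\<And>y. y \<in> carrier ?C \<Longrightarrow> y m = compl_map R I \<zero>\<^bsub>R\<^esub> m \<Longrightarrow> vlt (v y) (Some \<gamma>)"
        using m0 by blast
      have "v \<in> W_ik R I f n i m"
        unfolding W_ik_def rational_subset_def
      proof (intro CollectI conjI ballI)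
        show "v \<in> Spa R I" by fact
        show "v (compl_map R I (f i)) \<noteq> None" using g by simp
        fix t assume "t \<in> insert (compl_map R I (f i)) {compl_map R I (monomial R f n \<alpha>) | \<alpha>. \<alpha> \<in> multi_idx n i m}"
        then consider "t = compl_map R I (f i)" | \<alpha> where "t = compl_map R I (monomial R f n \<alpha>)" "\<alpha> \<in> multi_idx n i m"
          by blast
        then show "vle (v t) (v (compl_map R I (f i)))"
        proof cases
          case 1 then show ?thesis by (simp add: vle_refl)
        next
          case 2
          have mI: "monomial R f n \<alpha> \<in> ideal_pow R I m"
            using ip_finprod[OF I, where N=n and f=f and \<alpha>=\<alpha>] fI 2(2) by (simp add: monomial_def multi_idx_def)
          have mc: "monomial R f n \<alpha> \<in> carrier R" using mI ideal.Icarr[OF ip_ideal[OF I]] by blast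
          have "t m = ideal_pow R I m"
            using 2(1) a_rcos_zero[OF ip_ideal[OF I] mI] by (simp add: compl_map_def)
          moreover have "compl_map R I \<zero>\<^bsub>R\<^esub> m = ideal_pow R I m"
            using a_rcos_zero[OF ip_ideal[OF I] additive_subgroup.zero_closed[OF ideal.axioms(1)[OF ip_ideal[OF I]]]]
            by (simp add: compl_map_def)
          ultimately have "vlt (v t) (Some \<gamma>)" using m[of t] h_carrier[OF I mc] 2(1) by simp
          then show ?thesis using g by (simp add: vlt_def)
        qed
      qed
      then show "v \<in> (\<Union>k. W_ik R I f n i k)" by blast
    qed
  qed
  have P2: "(preimage_sigma R I (compl_V R I) :: ((nat \<Rightarrow> 'a set) \<Rightarrow> 'g option) set)
           = (\<Union>i<n. preimage_sigma R I (basic_open R (f i)))"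
  proof -
    have "\<not> I \<subseteq> P \<longleftrightarrow> (\<exists>i<n. f i \<notin> P)" if "P \<in> Spec R" for P
    proof -
      have "ideal P R" using that by (simp add: Spec_def primeideal.axioms(1))
      thus ?thesis using genideal_minimal[of P "f ` {..<n}"] assms(4) fI by auto
    qed
    thus ?thesis using spec
      by (auto simp: preimage_sigma_def compl_V_def basic_open_def)
  qed
  show ?thesis using P1 P2 by auto
qed

end
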